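(* Let $m\ge 1$, $M=2^m$, and let $P_{C_0}(0),\ldots,P_{C_{m-1}}(0)\in(0,1)$ be given, with $P_{C_k}(1)=1-P_{C_k}(0)$. Then for every $j\in\{0,\ldots,M-1\}$, $$\sum_{i=0}^{M-1}\gamma_{i,j}=M\sqrt{P_j},$$ and for every $k\in\{0,\ldots,m-1\}$, $$\sum_{i=0}^{M-1}(-1)^{n_{i,k}}\gamma_{i,j}=M(-1)^{n_{j,k}}\sqrt{P_j\,\frac{P_{C_k}(\bar n_{j,k})}{P_{C_k}(n_{j,k})}}.$$
   Context: For an integer $0\le i\le M-1$, $n_{i,k}\in\{0,1\}$ denotes the $k$-th bit of its base-2 representation, i.e. $i=\sum_{k=0}^{m-1}n_{i,k}2^k$; for a bit $b$, $\bar b=1-b$. The symbol probabilities are $P_i=\prod_{k=0}^{m-1}P_{C_k}(n_{i,k})$. The coefficients $\gamma_{i,j}$ are defined by $$\gamma_{i,j}=\prod_{k=0}^{m-1}\Big[(-1)^{\bar n_{i,k}n_{j,k}}\sqrt{P_{C_k}(0)}+(-1)^{n_{i,k}\bar n_{j,k}}\sqrt{P_{C_k}(1)}\Big].$$ *)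

theory Defs
  imports "HOL-Analysis.Analysis"
begin

definition nbit :: "nat \<Rightarrow> nat \<Rightarrow> nat" where
  "nbit i k = (i div 2 ^ k) mod 2"

definition bbar :: "nat \<Rightarrow> nat" where
  "bbar b = 1 - b"

definition PC :: "(nat \<Rightarrow> real) \<Rightarrow> nat \<Rightarrow> nat \<Rightarrow> real" where
  "PC p k b = (if b = 0 then p k else 1 - p k)"

definition Psym :: "nat \<Rightarrow> (nat \<Rightarrow> real) \<Rightarrow> nat \<Rightarrow> real" where
  "Psym m p i = (\<Prod>k<m. PC p k (nbit i k))"

definition gamma :: "nat \<Rightarrow> (nat \<Rightarrow> real) \<Rightarrow> nat \<Rightarrow> nat \<Rightarrow> real" where
  "gamma m p i j = (\<Prod>k<m.
      (-1) ^ (bbar (nbit i k) * nbit j k) * sqrt (PC p k 0)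
    + (-1) ^ (nbit i k * bbar (nbit j k)) * sqrt (PC p k 1))"

end

theory Submission
  imports Defs
begin

lemma sum_double: "(\<Sum>i<2*N. (g i :: real)) = (\<Sum>i<N. g (2*i) + g (2*i+1::nat))"
  by (induction N) (auto simp: lessThan_Suc add.assoc)

lemma nbit_0: "b < 2 \<Longrightarrow> nbit (2*i+b) 0 = b"
  by (simp add: nbit_def)

lemma nbit_Suc: "b < 2 \<Longrightarrow> nbit (2*i+b) (Suc k) = nbit i k"
  by (simp add: nbit_def div_mult2_eq)

lemma nbit_lt: "nbit i k < 2" by (simp add: nbit_def)

lemma sum_prod_bits:
  "(\<Sum>i<2^m. \<Prod>k<m. f k (nbit i k)) = (\<Prod>k<m. f k 0 + f k 1 :: real)"
proof (induction m arbitrary: f)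
  case 0 then show ?case by simp
next
  case (Suc m)
  have "(\<Sum>i<2^Suc m. \<Prod>k<Suc m. f k (nbit i k))
      = (\<Sum>i<2^m. (\<Prod>k<Suc m. f k (nbit (2*i) k)) + (\<Prod>k<Suc m. f k (nbit (2*i+1) k)))"
    by (simp add: sum_double)
  also have "\<dots> = (\<Sum>i<2^m. f 0 0 * (\<Prod>k<m. f (Suc k) (nbit i k)) + f 0 1 * (\<Prod>k<m. f (Suc k) (nbit i k)))"
    using nbit_0[of 0] nbit_Suc[of 0] nbit_0[of 1] nbit_Suc[of 1]
    by (simp only: prod.lessThan_Suc_shift) simp
  also have "\<dots> = (f 0 0 + f 0 1) * (\<Sum>i<2^m. \<Prod>k<m. f (Suc k) (nbit i k))"
    by (simp add: algebra_simps sum.distrib sum_distrib_left)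
  also have "\<dots> = (f 0 0 + f 0 1) * (\<Prod>k<m. f (Suc k) 0 + f (Suc k) 1)"
    using Suc[of "\<lambda>k. f (Suc k)"] by simp
  also have "\<dots> = (\<Prod>k<Suc m. f k 0 + f k 1)"
    by (simp only: prod.lessThan_Suc_shift)
  finally show ?case .
qed

lemma sqrt_prod: "finite A \<Longrightarrow> sqrt (prod f A) = (\<Prod>x\<in>A. sqrt (f x))"
  by (induction A rule: finite_induct) (auto simp: real_sqrt_mult)

theorem corollary1:
  fixes m :: nat and p :: "nat \<Rightarrow> real"
  assumes "m \<ge> 1"
    and "\<And>k. k < m \<Longrightarrow> 0 < p k \<and> p k < 1"
  shows "\<forall>j < 2 ^ m.
           (\<Sum>i<2 ^ m. gamma m p i j) = 2 ^ m * sqrt (Psym m p j)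
         \<and> (\<forall>k < m. (\<Sum>i<2 ^ m. (-1) ^ nbit i k * gamma m p i j)
              = 2 ^ m * (-1) ^ nbit j k *
                sqrt (Psym m p j * PC p k (bbar (nbit j k)) / PC p k (nbit j k)))"
proof (intro allI impI conjI)
  fix j :: nat
  define F where "F l x = (-1) ^ (bbar x * nbit j l) * sqrt (PC p l 0)
    + (-1) ^ (x * bbar (nbit j l)) * sqrt (PC p l 1)" for l x
  have g: "gamma m p i j = (\<Prod>l<m. F l (nbit i l))" for i
    by (simp add: gamma_def F_def)
  have F01: "F l 0 + F l 1 = 2 * sqrt (PC p l (nbit j l))" for l
    using nbit_lt[of j l]
    by (cases "nbit j l = 0") (auto simp: F_def bbar_def PC_def less_2_cases_iff)
  have F01': "F l 0 - F l 1 = 2 * (-1) ^ nbit j l * sqrt (PC p l (bbar (nbit j l)))" for l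
    using nbit_lt[of j l]
    by (cases "nbit j l = 0") (auto simp: F_def bbar_def PC_def less_2_cases_iff)
  show "(\<Sum>i<2 ^ m. gamma m p i j) = 2 ^ m * sqrt (Psym m p j)"
    unfolding g sum_prod_bits F01 by (simp add: prod.distrib Psym_def sqrt_prod)
  fix k assume k: "k < m"
  define G where "G l x = (if l = k then (-1) ^ x * F l x else F l x)" for l x
  have "(-1) ^ nbit i k * gamma m p i j = (\<Prod>l<m. G l (nbit i l))" for i
  proof -
    have "(\<Prod>l<m. G l (nbit i l)) = G k (nbit i k) * (\<Prod>l\<in>{..<m}-{k}. G l (nbit i l))"
      using k by (subst prod.remove[of _ k]) auto
    also have "(\<Prod>l\<in>{..<m}-{k}. G l (nbit i l)) = (\<Prod>l\<in>{..<m}-{k}. F l (nbit i l))"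
      by (rule prod.cong) (auto simp: G_def)
    also have "(\<Prod>l<m. F l (nbit i l)) = F k (nbit i k) * (\<Prod>l\<in>{..<m}-{k}. F l (nbit i l))"
      using k by (subst prod.remove[of _ k]) auto
    ultimately show ?thesis by (simp add: g G_def)
  qed
  hence "(\<Sum>i<2 ^ m. (-1) ^ nbit i k * gamma m p i j) = (\<Prod>l<m. G l 0 + G l 1)"
    using sum_prod_bits[of G m] by simp
  also have "\<dots> = (\<Prod>l<m. 2 * ((if l = k then (-1) ^ nbit j k else 1) *
      sqrt (if l = k then PC p k (bbar (nbit j k)) else PC p l (nbit j l))))"
    using F01 F01' by (intro prod.cong) (auto simp: G_def mult.assoc)
  also have "\<dots> = 2 ^ m * (-1) ^ nbit j k *
      sqrt (\<Prod>l<m. (if l = k then PC p k (bbar (nbit j k)) else PC p l (nbit j l)))"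
  proof -
    have c: "(\<Prod>l<m. (if l = k then (-1) ^ nbit j k else 1::real)) = (-1) ^ nbit j k"
      using k by (simp add: prod.delta)
    show ?thesis
      by (simp add: prod.distrib sqrt_prod c)
  qed
  also have "(\<Prod>l<m. (if l = k then PC p k (bbar (nbit j k)) else PC p l (nbit j l)))
      = Psym m p j * PC p k (bbar (nbit j k)) / PC p k (nbit j k)"
  proof -
    have pos: "PC p k (nbit j k) \<noteq> 0" using assms(2)[OF k] by (auto simp: PC_def)
    have "(\<Prod>l<m. (if l = k then PC p k (bbar (nbit j k)) else PC p l (nbit j l)))
        = PC p k (bbar (nbit j k)) * (\<Prod>l\<in>{..<m}-{k}. PC p l (nbit j l))"
      using k by (subst prod.remove[of _ k]) (auto intro!: prod.cong)
    moreover have "Psym m p j = PC p k (nbit j k) * (\<Prod>l\<in>{..<m}-{k}. PC p l (nbit j l))"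
      unfolding Psym_def using k by (subst prod.remove[of _ k]) auto
    ultimately show ?thesis using pos by simp
  qed
  finally show "(\<Sum>i<2 ^ m. (-1) ^ nbit i k * gamma m p i j)
              = 2 ^ m * (-1) ^ nbit j k *
                sqrt (Psym m p j * PC p k (bbar (nbit j k)) / PC p k (nbit j k))" .
qed

end
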